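(* Let $R$ be a ring. If $A$ is a clopen subset of $J\text{-spec}(R)$, then there exists $e\in R$ such that $A=W(e)$ and $eR(1-e)\subseteq J(R)$.
   Context: Rings are associative with identity, not necessarily commutative; $J(R)$ is the Jacobson radical. $J\text{-spec}(R)$ is the set of all prime (two-sided) ideals $P$ of $R$ with $J(R)\subseteq P$, topologized so that the closed sets are exactly the sets $W(I)=\{P\in J\text{-spec}(R): I\subseteq P\}$ for ideals $I$ of $R$. For $a\in R$, $W(a)=W(RaR)$. *)

theory Defs
  imports Main
begin

definition ideal :: "'a::ring_1 set \<Rightarrow> bool" where
  "ideal I \<longleftrightarrow> 0 \<in> I \<and> (\<forall>x\<in>I. \<forall>y\<in>I. x + y \<in> I \<and> x - y \<in> I)
     \<and> (\<forall>x\<in>I. \<forall>r. r * x \<in> I \<and> x * r \<in> I)"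

definition left_ideal :: "'a::ring_1 set \<Rightarrow> bool" where
  "left_ideal I \<longleftrightarrow> 0 \<in> I \<and> (\<forall>x\<in>I. \<forall>y\<in>I. x + y \<in> I \<and> x - y \<in> I)
     \<and> (\<forall>x\<in>I. \<forall>r. r * x \<in> I)"

definition maximal_left_ideal :: "'a::ring_1 set \<Rightarrow> bool" where
  "maximal_left_ideal M \<longleftrightarrow> left_ideal M \<and> M \<noteq> UNIV
     \<and> (\<forall>N. left_ideal N \<and> M \<subseteq> N \<longrightarrow> N = M \<or> N = UNIV)"

definition jacobson :: "'a::ring_1 set" where
  "jacobson = \<Inter> {M. maximal_left_ideal M}"

definition prime_ideal :: "'a::ring_1 set \<Rightarrow> bool" where
  "prime_ideal P \<longleftrightarrow> ideal P \<and> P \<noteq> UNIV \<and>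
     (\<forall>I J. ideal I \<and> ideal J \<and> (\<forall>a\<in>I. \<forall>b\<in>J. a * b \<in> P) \<longrightarrow> I \<subseteq> P \<or> J \<subseteq> P)"

definition Jspec :: "'a::ring_1 set set" where
  "Jspec = {P. prime_ideal P \<and> jacobson \<subseteq> P}"

definition W :: "'a::ring_1 set \<Rightarrow> 'a set set" where
  "W I = {P \<in> Jspec. I \<subseteq> P}"

text \<open>Two-sided ideal generated by a set (for a singleton: RaR).\<close>
definition gen_ideal :: "'a::ring_1 set \<Rightarrow> 'a set" where
  "gen_ideal S = \<Inter> {I. ideal I \<and> S \<subseteq> I}"

definition W_elem :: "'a::ring_1 \<Rightarrow> 'a set set" where
  "W_elem a = W (gen_ideal {a})"

definition Jspec_closed :: "'a::ring_1 set set \<Rightarrow> bool" where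
  "Jspec_closed A \<longleftrightarrow> (\<exists>I. ideal I \<and> A = W I)"

definition Jspec_clopen :: "'a::ring_1 set set \<Rightarrow> bool" where
  "Jspec_clopen A \<longleftrightarrow> A \<subseteq> Jspec \<and> Jspec_closed A \<and> Jspec_closed (Jspec - A)"

end

theory Submission
  imports Defs
begin

lemma ideal_one: "ideal P \<Longrightarrow> (1::'a::ring_1) \<in> P \<Longrightarrow> P = UNIV"
proof -
  assume "ideal P" "1 \<in> P"
  hence "\<forall>r. r * 1 \<in> P" unfolding ideal_def by blast
  thus "P = UNIV" by auto
qed

lemma left_ideal_one: "left_ideal P \<Longrightarrow> (1::'a::ring_1) \<in> P \<Longrightarrow> P = UNIV"
proof -
  assume "left_ideal P" "1 \<in> P"
  hence "\<forall>r. r * 1 \<in> P" unfolding left_ideal_def by blast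
  thus "P = UNIV" by auto
qed

lemma max_left_add:
  fixes a :: "'a::ring_1"
  assumes M: "maximal_left_ideal M" and a: "a \<notin> M"
  shows "\<exists>m\<in>M. \<exists>s. 1 = m + s * a"
proof -
  define N where "N = {m + s * a | m s. m \<in> M}"
  have lM: "left_ideal M" using M by (simp add: maximal_left_ideal_def)
  have "left_ideal N"
    unfolding left_ideal_def N_def
  proof (intro conjI ballI allI)
    have "(0::'a) = 0 + 0 * a" by simp
    moreover have "(0::'a) \<in> M" using lM by (simp add: left_ideal_def)
    ultimately show "0 \<in> {m + s * a |m s. m \<in> M}" by blast
  next
    fix x y assume x: "x \<in> {m + s * a |m s. m \<in> M}" and y: "y \<in> {m + s * a |m s. m \<in> M}"
    from x obtain m1 s1 where 1: "x = m1 + s1 * a" "m1 \<in> M" by auto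
    from y obtain m2 s2 where 2: "y = m2 + s2 * a" "m2 \<in> M" by auto
    have "x + y = (m1 + m2) + (s1 + s2) * a" using 1 2 by (simp add: algebra_simps)
    moreover have "m1 + m2 \<in> M" using lM 1 2 by (simp add: left_ideal_def)
    ultimately show "x + y \<in> {m + s * a |m s. m \<in> M}" by blast
    have "x - y = (m1 - m2) + (s1 - s2) * a" using 1 2 by (simp add: algebra_simps)
    moreover have "m1 - m2 \<in> M" using lM 1 2 by (simp add: left_ideal_def)
    ultimately show "x - y \<in> {m + s * a |m s. m \<in> M}" by blast
  next
    fix x r assume x: "x \<in> {m + s * a |m s. m \<in> M}"
    from x obtain m1 s1 where 1: "x = m1 + s1 * a" "m1 \<in> M" by auto
    have "r * x = r * m1 + (r * s1) * a" using 1 by (simp add: algebra_simps)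
    moreover have "r * m1 \<in> M" using lM 1 by (simp add: left_ideal_def)
    ultimately show "r * x \<in> {m + s * a |m s. m \<in> M}" by blast
  qed
  moreover have "M \<subseteq> N"
  proof
    fix x assume "x \<in> M"
    moreover have "x = x + 0 * a" by simp
    ultimately show "x \<in> N" unfolding N_def by blast
  qed
  moreover have "a \<in> N"
  proof -
    have "a = 0 + 1 * a" by simp
    moreover have "(0::'a) \<in> M" using lM by (simp add: left_ideal_def)
    ultimately show ?thesis unfolding N_def by blast
  qed
  ultimately have "N = UNIV" using M a unfolding maximal_left_ideal_def by blast
  then have "1 \<in> N" by simp
  then show ?thesis unfolding N_def by auto
qed

lemma colon_max:
  fixes r :: "'a::ring_1"
  assumes M: "maximal_left_ideal M" and r: "r \<notin> M"
  shows "maximal_left_ideal {y. y * r \<in> M}"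
proof -
  have lM: "left_ideal M" using M by (simp add: maximal_left_ideal_def)
  have l: "left_ideal {y. y * r \<in> M}"
    unfolding left_ideal_def
  proof (intro conjI ballI allI)
    show "0 \<in> {y. y * r \<in> M}" using lM by (simp add: left_ideal_def)
  next
    fix x y assume "x \<in> {y. y * r \<in> M}" "y \<in> {y. y * r \<in> M}"
    hence xy: "x * r \<in> M" "y * r \<in> M" by auto
    have "x * r + y * r \<in> M" "x * r - y * r \<in> M" using xy lM unfolding left_ideal_def by blast+
    thus "x + y \<in> {y. y * r \<in> M}" "x - y \<in> {y. y * r \<in> M}"
      by (simp_all add: distrib_right left_diff_distrib)
  next
    fix x t assume "x \<in> {y. y * r \<in> M}"
    hence "t * (x * r) \<in> M" using lM unfolding left_ideal_def by blast
    thus "t * x \<in> {y. y * r \<in> M}" by (simp add: mult.assoc)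
  qed
  have ne: "{y. y * r \<in> M} \<noteq> UNIV"
  proof
    assume "{y. y * r \<in> M} = UNIV"
    hence "1 * r \<in> M" by blast
    thus False using r by simp
  qed
  have "N = {y. y * r \<in> M} \<or> N = UNIV" if N: "left_ideal N" "{y. y * r \<in> M} \<subseteq> N" for N
  proof (cases "N = {y. y * r \<in> M}")
    case False
    then obtain n where n: "n \<in> N" "n * r \<notin> M" using N by auto
    then obtain m1 b where mb: "m1 \<in> M" "1 = m1 + b * (n * r)" using max_left_add[OF M] by blast
    have "y \<in> N" for y
    proof -
      have "y * r = y * r * (m1 + b * (n * r))" by (simp add: mb(2)[symmetric])
      also have "\<dots> = y * r * m1 + y * r * b * n * r" by (simp add: distrib_left mult.assoc)
      finally have e: "y * r = y * r * m1 + y * r * b * n * r" .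
      have "(y - y * r * b * n) * r = y * r - y * r * b * n * r" by (simp add: left_diff_distrib)
      also have "\<dots> = y * r * m1" unfolding diff_eq_eq by (rule e)
      finally have "(y - y * r * b * n) * r = y * r * m1" .
      moreover have "y * r * m1 \<in> M" using lM mb by (simp add: left_ideal_def)
      ultimately have "y - y * r * b * n \<in> N" using N by auto
      moreover have "y * r * b * n \<in> N" using N(1) n unfolding left_ideal_def by (simp add: mult.assoc)
      ultimately have "(y - y * r * b * n) + y * r * b * n \<in> N" using N(1) unfolding left_ideal_def by blast
      thus ?thesis by simp
    qed
    thus ?thesis by auto
  qed simp
  thus ?thesis using l ne unfolding maximal_left_ideal_def by blast
qed

lemma J_sub:
  fixes x :: "'a::ring_1"
  assumes M: "maximal_left_ideal M" and x: "x \<in> jacobson"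
  shows "x * r \<in> M"
proof (cases "r \<in> M")
  case True thus ?thesis using M by (simp add: maximal_left_ideal_def left_ideal_def)
next
  case False
  have "x \<in> {y. y * r \<in> M}" using x colon_max[OF M False] unfolding jacobson_def by blast
  thus ?thesis by simp
qed

lemma PM_prime:
  fixes M :: "'a::ring_1 set"
  assumes M: "maximal_left_ideal M"
  shows "prime_ideal {x. \<forall>r. x * r \<in> M}"
proof -
  have lM: "left_ideal M" and ne: "M \<noteq> UNIV" using M by (auto simp: maximal_left_ideal_def)
  let ?P = "{x. \<forall>r. x * r \<in> M}"
  have id: "ideal ?P"
    using lM unfolding ideal_def left_ideal_def by (auto simp: algebra_simps mult.assoc)
  have "1 \<notin> M" using left_ideal_one[OF lM] ne by blast
  hence ne2: "?P \<noteq> UNIV" by (metis (mono_tags) UNIV_I mem_Collect_eq mult_1_left)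
  have "I \<subseteq> ?P \<or> K \<subseteq> ?P" if I: "ideal I" and K: "ideal K" and IK: "\<forall>a\<in>I. \<forall>b\<in>K. a * b \<in> ?P" for I K
  proof (rule ccontr)
    assume "\<not> (I \<subseteq> ?P \<or> K \<subseteq> ?P)"
    then obtain k r where k: "k \<in> K" "k * r \<notin> M" by auto
    then obtain m s where ms: "m \<in> M" "1 = m + s * (k * r)" using max_left_add[OF M] by blast
    have "I \<subseteq> ?P"
    proof
      fix x assume x: "x \<in> I"
      have "x * t \<in> M" for t
      proof -
        have "x * t = x * t * (m + s * (k * r))" by (simp add: ms(2)[symmetric])
        also have "\<dots> = x * t * m + (x * t * s * k) * r" by (simp add: distrib_left mult.assoc)
        finally have "x * t = x * t * m + (x * t * s * k) * r" .
        moreover have "x * t * m \<in> M" using lM ms by (simp add: left_ideal_def)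
        moreover have "x * t * s \<in> I" using I x unfolding ideal_def by blast
        hence "(x * t * s * k) * r \<in> M" using IK k by blast
        ultimately show ?thesis using lM unfolding left_ideal_def by metis
      qed
      thus "x \<in> ?P" by simp
    qed
    thus False using \<open>\<not> (I \<subseteq> ?P \<or> K \<subseteq> ?P)\<close> by blast
  qed
  thus ?thesis using id ne2 unfolding prime_ideal_def by blast
qed

lemma PM_Jspec:
  assumes M: "maximal_left_ideal (M::'a::ring_1 set)"
  shows "{x. \<forall>r. x * r \<in> M} \<in> Jspec"
  using PM_prime[OF M] J_sub[OF M] unfolding Jspec_def by blast

lemma J_char: "(x::'a::ring_1) \<in> jacobson \<longleftrightarrow> (\<forall>P\<in>Jspec. x \<in> P)"
proof
  assume "x \<in> jacobson" thus "\<forall>P\<in>Jspec. x \<in> P" unfolding Jspec_def by auto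
next
  assume H: "\<forall>P\<in>Jspec. x \<in> P"
  show "x \<in> jacobson" unfolding jacobson_def
  proof
    fix M :: "'a set" assume "M \<in> {M. maximal_left_ideal M}"
    hence M: "maximal_left_ideal M" by simp
    have "x \<in> {x. \<forall>r. x * r \<in> M}" using H PM_Jspec[OF M] by (rule bspec)
    hence "\<forall>r. x * r \<in> M" by simp
    hence "x * 1 \<in> M" by (rule spec)
    thus "x \<in> M" by simp
  qed
qed

lemma Jspec_ideal: "P \<in> Jspec \<Longrightarrow> ideal P"
  unfolding Jspec_def prime_ideal_def by blast

lemma ideal_ops:
  assumes "ideal I"
  shows "0 \<in> I" "x \<in> I \<Longrightarrow> y \<in> I \<Longrightarrow> x + y \<in> I" "x \<in> I \<Longrightarrow> y \<in> I \<Longrightarrow> x - y \<in> I"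
    "x \<in> I \<Longrightarrow> r * x \<in> I" "x \<in> I \<Longrightarrow> x * r \<in> I"
  using assms unfolding ideal_def by blast+

lemma J_ideal: "ideal (jacobson :: 'a::ring_1 set)"
  unfolding ideal_def
proof (intro conjI ballI allI)
  show "0 \<in> (jacobson::'a set)" unfolding J_char using Jspec_ideal ideal_ops(1) by blast
next
  fix x y :: 'a assume "x \<in> jacobson" "y \<in> jacobson"
  hence xy: "\<forall>P\<in>Jspec. x \<in> P \<and> y \<in> P" unfolding J_char by blast
  show "x + y \<in> jacobson" unfolding J_char
  proof
    fix P :: "'a set" assume P: "P \<in> Jspec"
    thus "x + y \<in> P" using xy ideal_ops(2)[OF Jspec_ideal[OF P]] by blast
  qed
  show "x - y \<in> jacobson" unfolding J_char
  proof
    fix P :: "'a set" assume P: "P \<in> Jspec"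
    thus "x - y \<in> P" using xy ideal_ops(3)[OF Jspec_ideal[OF P]] by blast
  qed
next
  fix x r :: 'a assume "x \<in> jacobson"
  hence xy: "\<forall>P\<in>Jspec. x \<in> P" unfolding J_char by blast
  show "r * x \<in> jacobson" unfolding J_char
  proof
    fix P :: "'a set" assume P: "P \<in> Jspec"
    thus "r * x \<in> P" using xy ideal_ops(4)[OF Jspec_ideal[OF P]] by blast
  qed
  show "x * r \<in> jacobson" unfolding J_char
  proof
    fix P :: "'a set" assume P: "P \<in> Jspec"
    thus "x * r \<in> P" using xy ideal_ops(5)[OF Jspec_ideal[OF P]] by blast
  qed
qed

lemma exists_max:
  fixes L :: "'a::ring_1 set"
  assumes L: "left_ideal L" and one: "1 \<notin> L"
  shows "\<exists>M. maximal_left_ideal M \<and> L \<subseteq> M"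
proof -
  let ?A = "{N. left_ideal N \<and> L \<subseteq> N \<and> (1::'a) \<notin> N}"
  have "\<forall>C\<in>chains ?A. \<exists>U\<in>?A. \<forall>X\<in>C. X \<subseteq> U"
  proof
    fix C assume C: "C \<in> chains ?A"
    show "\<exists>U\<in>?A. \<forall>X\<in>C. X \<subseteq> U"
    proof (cases "C = {}")
      case True thus ?thesis using L one by auto
    next
      case False
      have sub: "C \<subseteq> ?A" and ch: "\<forall>X\<in>C. \<forall>Y\<in>C. X \<subseteq> Y \<or> Y \<subseteq> X"
        using C by (auto simp: chains_def chain_subset_def)
      have "left_ideal (\<Union>C)" unfolding left_ideal_def
      proof (intro conjI ballI allI)
        show "0 \<in> \<Union>C" using False sub by (auto simp: left_ideal_def)
      next
        fix x y assume "x \<in> \<Union>C" "y \<in> \<Union>C"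
        then obtain X Y where XY: "X \<in> C" "Y \<in> C" "x \<in> X" "y \<in> Y" by auto
        then have "\<exists>Z\<in>C. x \<in> Z \<and> y \<in> Z" using ch by blast
        then obtain Z where Z: "Z \<in> C" "x \<in> Z" "y \<in> Z" by blast
        hence "left_ideal Z" using sub by auto
        thus "x + y \<in> \<Union>C" "x - y \<in> \<Union>C" using Z by (auto simp: left_ideal_def)
      next
        fix x r assume "x \<in> \<Union>C"
        then obtain X where X: "X \<in> C" "x \<in> X" by auto
        hence "left_ideal X" using sub by auto
        thus "r * x \<in> \<Union>C" using X unfolding left_ideal_def by blast
      qed
      moreover have "L \<subseteq> \<Union>C" using False sub by auto
      moreover have "1 \<notin> \<Union>C" using sub by auto
      ultimately show ?thesis by blast
    qed
  qed
  from Zorn_Lemma2[OF this] obtain M where M: "M \<in> ?A" "\<forall>X\<in>?A. M \<subseteq> X \<longrightarrow> X = M" by blast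
  have "maximal_left_ideal M" unfolding maximal_left_ideal_def
  proof (intro conjI allI impI)
    show "left_ideal M" using M by simp
    show "M \<noteq> UNIV" using M by auto
  next
    fix N assume N: "left_ideal N \<and> M \<subseteq> N"
    show "N = M \<or> N = UNIV"
    proof (cases "1 \<in> N")
      case True thus ?thesis using left_ideal_one N by blast
    next
      case False thus ?thesis using M N by blast
    qed
  qed
  thus ?thesis using M by blast
qed

lemma ideal_left: "ideal I \<Longrightarrow> left_ideal I"
  unfolding ideal_def left_ideal_def by blast

theorem lemma3p2:
  fixes A :: "'a::ring_1 set set"
  assumes "Jspec_clopen A"
  shows "\<exists>e. A = W_elem e \<and> (\<forall>r. e * r * (1 - e) \<in> jacobson)"
proof -
  from assms obtain I K where I: "ideal I" "A = W I" and K: "ideal K" "Jspec - A = W K"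
    and AJ: "A \<subseteq> Jspec"
    unfolding Jspec_clopen_def Jspec_closed_def by blast
  have JI: "ideal (jacobson::'a set)" by (rule J_ideal)
  note Io = ideal_ops[OF I(1)] and Ko = ideal_ops[OF K(1)] and Jo = ideal_ops[OF JI]
  define L where "L = {i + k + j | i k j. i \<in> I \<and> k \<in> K \<and> j \<in> jacobson}"
  have Lmem: "i + k + j \<in> L" if "i \<in> I" "k \<in> K" "j \<in> jacobson" for i k j
    unfolding L_def using that by blast
  have "1 \<in> L"
  proof (rule ccontr)
    assume n1: "1 \<notin> L"
    have idL: "ideal L" unfolding ideal_def
    proof (intro conjI ballI allI)
      have "(0::'a) = 0 + 0 + 0" by simp
      thus "0 \<in> L" using Lmem[OF Io(1) Ko(1) Jo(1)] by simp
    next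
      fix x y assume x: "x \<in> L" and y: "y \<in> L"
      from x obtain i1 k1 j1 where 1: "x = i1 + k1 + j1" "i1 \<in> I" "k1 \<in> K" "j1 \<in> jacobson"
        unfolding L_def by blast
      from y obtain i2 k2 j2 where 2: "y = i2 + k2 + j2" "i2 \<in> I" "k2 \<in> K" "j2 \<in> jacobson"
        unfolding L_def by blast
      have "x + y = (i1 + i2) + (k1 + k2) + (j1 + j2)" using 1 2 by (simp add: algebra_simps)
      thus "x + y \<in> L" using Lmem[OF Io(2)[OF 1(2) 2(2)] Ko(2)[OF 1(3) 2(3)] Jo(2)[OF 1(4) 2(4)]] by simp
      have "x - y = (i1 - i2) + (k1 - k2) + (j1 - j2)" using 1 2 by (simp add: algebra_simps)
      thus "x - y \<in> L" using Lmem[OF Io(3)[OF 1(2) 2(2)] Ko(3)[OF 1(3) 2(3)] Jo(3)[OF 1(4) 2(4)]] by simp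
    next
      fix x r assume x: "x \<in> L"
      from x obtain i1 k1 j1 where 1: "x = i1 + k1 + j1" "i1 \<in> I" "k1 \<in> K" "j1 \<in> jacobson"
        unfolding L_def by blast
      have "r * x = r * i1 + r * k1 + r * j1" using 1 by (simp add: distrib_left)
      thus "r * x \<in> L" using Lmem[OF Io(4)[OF 1(2)] Ko(4)[OF 1(3)] Jo(4)[OF 1(4)]] by simp
      have "x * r = i1 * r + k1 * r + j1 * r" using 1 by (simp add: distrib_right)
      thus "x * r \<in> L" using Lmem[OF Io(5)[OF 1(2)] Ko(5)[OF 1(3)] Jo(5)[OF 1(4)]] by simp
    qed
    obtain M where M: "maximal_left_ideal M" "L \<subseteq> M"
      using exists_max[OF ideal_left[OF idL] n1] by blast
    let ?P = "{x. \<forall>r. x * r \<in> M}"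
    have PJ: "?P \<in> Jspec" by (rule PM_Jspec[OF M(1)])
    have LP: "L \<subseteq> ?P"
    proof
      fix x assume "x \<in> L"
      hence "\<forall>r. x * r \<in> L" using ideal_ops(5)[OF idL] by blast
      thus "x \<in> ?P" using M(2) by blast
    qed
    have "I \<subseteq> L"
    proof
      fix x assume "x \<in> I"
      from Lmem[OF this Ko(1) Jo(1)] show "x \<in> L" by simp
    qed
    moreover have "K \<subseteq> L"
    proof
      fix x assume "x \<in> K"
      from Lmem[OF Io(1) this Jo(1)] show "x \<in> L" by simp
    qed
    ultimately have "?P \<in> W I" "?P \<in> W K" using PJ LP unfolding W_def by auto
    thus False using I K by blast
  qed
  then obtain i k j where ikj: "1 = i + k + j" "i \<in> I" "k \<in> K" "j \<in> jacobson"
    unfolding L_def by blast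
  have IK: "a * b \<in> jacobson" if ab: "a \<in> I" "b \<in> K" for a b
    unfolding J_char
  proof
    fix P :: "'a set" assume P: "P \<in> Jspec"
    note Po = ideal_ops[OF Jspec_ideal[OF P]]
    show "a * b \<in> P"
    proof (cases "P \<in> A")
      case True hence "I \<subseteq> P" using I by (simp add: W_def)
      thus ?thesis using Po(5) ab by blast
    next
      case False hence "K \<subseteq> P" using K P by (auto simp: W_def)
      thus ?thesis using Po(4) ab by blast
    qed
  qed
  have gen: "gen_ideal {a} \<subseteq> P \<longleftrightarrow> a \<in> P" if "ideal P" for P a
    using that unfolding gen_ideal_def by blast
  have WE: "P \<in> W_elem a \<longleftrightarrow> P \<in> Jspec \<and> a \<in> P" for P a
    unfolding W_elem_def W_def using gen[OF Jspec_ideal] by blast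
  show ?thesis
  proof (intro exI conjI allI)
    show "A = W_elem i"
    proof
      show "A \<subseteq> W_elem i"
      proof
        fix P assume "P \<in> A"
        hence "P \<in> Jspec" "I \<subseteq> P" using I by (auto simp: W_def)
        thus "P \<in> W_elem i" unfolding WE using ikj(2) by blast
      qed
    next
      show "W_elem i \<subseteq> A"
      proof
        fix P assume "P \<in> W_elem i"
        hence P: "P \<in> Jspec" "i \<in> P" unfolding WE by blast+
        note Po = ideal_ops[OF Jspec_ideal[OF P(1)]]
        have neP: "P \<noteq> UNIV" using P by (auto simp: Jspec_def prime_ideal_def)
        show "P \<in> A"
        proof (rule ccontr)
          assume "P \<notin> A"
          hence "K \<subseteq> P" using K P by (auto simp: W_def)
          hence "k \<in> P" using ikj by blast
          moreover have "j \<in> P" using P ikj by (auto simp: Jspec_def)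
          ultimately have "i + k + j \<in> P" using P(2) Po(2) by blast
          hence "1 \<in> P" using ikj(1) by simp
          thus False using ideal_one[OF Jspec_ideal[OF P(1)]] neP by blast
        qed
      qed
    qed
  next
    fix r
    have "1 - i = k + j" using ikj(1) by (simp add: algebra_simps)
    hence "i * r * (1 - i) = i * r * k + i * r * j" by (simp add: distrib_left)
    moreover have "i * r \<in> I" using Io(5) ikj by blast
    hence "i * r * k \<in> jacobson" using IK ikj by blast
    moreover have "i * r * j \<in> jacobson" using Jo(4) ikj by blast
    ultimately show "i * r * (1 - i) \<in> jacobson" using Jo(2) by metis
  qed
qed

end
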